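(* Let $k\in\mathbb{R}$, $\upsilon$ a multiplier system of weight $k$, and assume $\rho:\Gamma\to GL_d(\mathbb{C})$ is an indecomposable representation such that $\mathcal{H}(k,\rho,\upsilon)\neq\{0\}$. Then $\rho(S^2)=\pm I$, and $$\mathcal{H}(\rho,\upsilon)=\bigoplus_{n\in\mathbb{Z}}\mathcal{H}(k+2n,\rho,\upsilon).$$
   Context: $\Gamma=SL(2,\mathbb{Z})$ acts on the upper half-plane $\mathbb{H}$ by Möbius transformations; $S=\begin{pmatrix}0&-1\\1&0\end{pmatrix}$. Complex powers use the principal branch of $\log$. A multiplier system of weight $k$ is a map $\upsilon:\Gamma\to\{|w|=1\}$ such that $\nu(\gamma,z)=\upsilon(\gamma)(cz+d)^k$ satisfies $\nu(\gamma\sigma,z)=\nu(\gamma,\sigma z)\nu(\sigma,z)$; it is also a multiplier system of weight $k+n$ for every $n\in\mathbb{Z}$. Slash: $(f|_k^\upsilon\gamma)(z)=\upsilon(\gamma)^{-1}(cz+d)^{-k}f(\gamma z)$. Moderate growth: $|f(x+iy)|\le y^N$ for $y>c$. $\mathcal{H}(k,\rho,\upsilon)$: column vectors $F$ of holomorphic moderate-growth functions with $F|_k^\upsilon\gamma=\rho(\gamma)F$ for all $\gamma$; $\mathcal{H}(\rho,\upsilon)=\bigoplus_{n\in\mathbb{Z}}\mathcal{H}(k+n,\rho,\upsilon)$. *)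

theory Defs
  imports "HOL-Analysis.Analysis"
begin

text \<open>Elements of SL(2,Z) are represented as quadruples (a,b,c,d) standing for the
  matrix with rows (a b) and (c d).\<close>

type_synonym mat2 = "int \<times> int \<times> int \<times> int"

definition SL2Z :: "mat2 set" where
  "SL2Z = {(a,b,c,d). a * d - b * c = 1}"

definition mmul :: "mat2 \<Rightarrow> mat2 \<Rightarrow> mat2" where
  "mmul g h = (case g of (a,b,c,d) \<Rightarrow> case h of (a',b',c',d') \<Rightarrow>
     (a*a' + b*c', a*b' + b*d', c*a' + d*c', c*b' + d*d'))"

definition S_mat :: mat2 where "S_mat = (0, -1, 1, 0)"

definition mob :: "mat2 \<Rightarrow> complex \<Rightarrow> complex" where
  "mob g z = (case g of (a,b,c,d) \<Rightarrow> (of_int a * z + of_int b) / (of_int c * z + of_int d))"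

text \<open>(cz+d)^k with the principal branch of log.\<close>
definition jfac :: "real \<Rightarrow> mat2 \<Rightarrow> complex \<Rightarrow> complex" where
  "jfac k g z = (case g of (a,b,c,d) \<Rightarrow> (of_int c * z + of_int d) powr (of_real k))"

definition upper_half :: "complex set" where "upper_half = {z. Im z > 0}"

definition multiplier_system :: "real \<Rightarrow> (mat2 \<Rightarrow> complex) \<Rightarrow> bool" where
  "multiplier_system k \<upsilon> \<longleftrightarrow>
     (\<forall>g\<in>SL2Z. norm (\<upsilon> g) = 1) \<and>
     (\<forall>g\<in>SL2Z. \<forall>h\<in>SL2Z. \<forall>z\<in>upper_half.
        \<upsilon> (mmul g h) * jfac k (mmul g h) z = (\<upsilon> g * jfac k g (mob h z)) * (\<upsilon> h * jfac k h z))"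

text \<open>A representation of SL(2,Z) in GL_d(C), d = CARD('d).\<close>
definition representation :: "(mat2 \<Rightarrow> complex^'d^'d) \<Rightarrow> bool" where
  "representation \<rho> \<longleftrightarrow>
     (\<forall>g\<in>SL2Z. invertible (\<rho> g)) \<and>
     (\<forall>g\<in>SL2Z. \<forall>h\<in>SL2Z. \<rho> (mmul g h) = \<rho> g ** \<rho> h)"

definition csubspace :: "(complex^'d) set \<Rightarrow> bool" where
  "csubspace U \<longleftrightarrow> 0 \<in> U \<and> (\<forall>x\<in>U. \<forall>y\<in>U. x + y \<in> U) \<and> (\<forall>c. \<forall>x\<in>U. c *s x \<in> U)"

definition invariant_subspace :: "(mat2 \<Rightarrow> complex^'d^'d) \<Rightarrow> (complex^'d) set \<Rightarrow> bool" where
  "invariant_subspace \<rho> U \<longleftrightarrow> csubspace U \<and> (\<forall>g\<in>SL2Z. \<forall>v\<in>U. \<rho> g *v v \<in> U)"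

definition indecomposable :: "(mat2 \<Rightarrow> complex^'d^'d) \<Rightarrow> bool" where
  "indecomposable \<rho> \<longleftrightarrow>
     \<not> (\<exists>U W. invariant_subspace \<rho> U \<and> invariant_subspace \<rho> W \<and>
             U \<noteq> {0} \<and> W \<noteq> {0} \<and> U \<inter> W = {0} \<and>
             (\<forall>v. \<exists>u\<in>U. \<exists>w\<in>W. v = u + w))"

text \<open>H(k,rho,upsilon). Functions on the upper half-plane are represented by functions
  on C that vanish outside the upper half-plane (canonical representatives).\<close>
definition mf_space :: "real \<Rightarrow> (mat2 \<Rightarrow> complex^'d^'d) \<Rightarrow> (mat2 \<Rightarrow> complex)
                         \<Rightarrow> (complex \<Rightarrow> complex^'d) set" where
  "mf_space k \<rho> \<upsilon> = {F.
     (\<forall>i. (\<lambda>z. F z $ i) holomorphic_on upper_half) \<and>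
     (\<forall>i. \<exists>N c::real. \<forall>z\<in>upper_half. Im z > c \<longrightarrow> norm (F z $ i) \<le> Im z powr N) \<and>
     (\<forall>g\<in>SL2Z. \<forall>z\<in>upper_half.
        (inverse (\<upsilon> g) * jfac (- k) g z) *s F (mob g z) = \<rho> g *v F z) \<and>
     (\<forall>z. z \<notin> upper_half \<longrightarrow> F z = 0)}"

text \<open>Formal direct sum over the index set I of the spaces H(k+n,rho,upsilon), n in I,
  as finitely supported families, sitting inside the full sum over all n in Z.\<close>
definition graded_sum :: "real \<Rightarrow> (mat2 \<Rightarrow> complex^'d^'d) \<Rightarrow> (mat2 \<Rightarrow> complex) \<Rightarrow> int set
                          \<Rightarrow> (int \<Rightarrow> complex \<Rightarrow> complex^'d) set" where
  "graded_sum k \<rho> \<upsilon> I = {G.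
     finite {n. G n \<noteq> (\<lambda>_. 0)} \<and>
     (\<forall>n\<in>I. G n \<in> mf_space (k + of_int n) \<rho> \<upsilon>) \<and>
     (\<forall>n. n \<notin> I \<longrightarrow> G n = (\<lambda>_. 0))}"

end

theory Submission
  imports Defs
begin

lemma neg_mv: "(- M) *v (x::'a::comm_ring_1^'n) = - (M *v x)"
  by (simp add: matrix_vector_mult_def vec_eq_iff sum_negf)

lemma mm: "mmul S_mat S_mat = (-1,0,0,-1)" by (simp add: mmul_def S_mat_def)
lemma mSL: "(-1,0,0,-1) \<in> SL2Z" by (simp add: SL2Z_def)
lemma iSL: "(1,0,0,1) \<in> SL2Z" by (simp add: SL2Z_def)
lemma mob_m: "mob (-1,0,0,-1) z = z" by (simp add: mob_def)
lemma jfac_m: "jfac r (-1,0,0,-1) z = exp (of_real r * (\<i> * pi))"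
  by (simp add: jfac_def powr_def)

lemma eig:
  assumes "F \<in> mf_space k' \<rho> \<upsilon>" "F z \<noteq> 0"
  shows "(inverse (\<upsilon> (-1,0,0,-1)) * exp (of_real (-k') * (\<i> * pi))) *s F z
         = \<rho> (-1,0,0,-1) *v F z"
proof -
  have "z \<in> upper_half" using assms unfolding mf_space_def by auto
  with assms(1) mSL have "(inverse (\<upsilon> (-1,0,0,-1)) * jfac (- k') (-1,0,0,-1) z) *s F (mob (-1,0,0,-1) z)
     = \<rho> (-1,0,0,-1) *v F z" unfolding mf_space_def by blast
  then show ?thesis by (simp add: mob_m jfac_m)
qed

lemma scal_eq:
  assumes "c *s v = e *s (v::complex^'n)" "v \<noteq> 0"
  shows "c = e"
proof -
  obtain i where "v $ i \<noteq> 0" using assms(2) by (metis vec_eq_iff zero_index)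
  moreover have "c * v $ i = e * v $ i" using assms(1) by (metis vector_scalar_mult_def vec_lambda_beta)
  ultimately show ?thesis by simp
qed

lemma zero_mf: "(\<lambda>_. 0) \<in> mf_space k \<rho> \<upsilon>"
  unfolding mf_space_def upper_half_def by auto

theorem lemma2p15:
  fixes k :: real
    and \<upsilon> :: "mat2 \<Rightarrow> complex"
    and \<rho> :: "mat2 \<Rightarrow> complex^'d^'d"
  assumes "multiplier_system k \<upsilon>"
    and "representation \<rho>"
    and "indecomposable \<rho>"
    and "mf_space k \<rho> \<upsilon> \<noteq> {(\<lambda>_. 0)}"
  shows "(\<rho> (mmul S_mat S_mat) = mat 1 \<or> \<rho> (mmul S_mat S_mat) = - mat 1) \<and>
         graded_sum k \<rho> \<upsilon> UNIV = graded_sum k \<rho> \<upsilon> (range (\<lambda>n. 2 * n))"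
proof -
  define A where "A = \<rho> (-1,0,0,-1)"
  have rep: "\<And>g h. g \<in> SL2Z \<Longrightarrow> h \<in> SL2Z \<Longrightarrow> \<rho> (mmul g h) = \<rho> g ** \<rho> h"
    using assms(2) unfolding representation_def by blast
  have rI: "\<rho> (1,0,0,1) = mat 1"
  proof -
    obtain B where B: "\<rho> (1,0,0,1) ** B = mat 1"
      using assms(2) iSL unfolding representation_def invertible_def by blast
    have "\<rho> (1,0,0,1) ** \<rho> (1,0,0,1) = \<rho> (1,0,0,1)"
      using rep[OF iSL iSL] by (simp add: mmul_def)
    then have "\<rho> (1,0,0,1) ** \<rho> (1,0,0,1) ** B = \<rho> (1,0,0,1) ** B" by simp
    then have "\<rho> (1,0,0,1) ** (\<rho> (1,0,0,1) ** B) = \<rho> (1,0,0,1) ** B" by (simp add: matrix_mul_assoc)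
    then show ?thesis using B by (simp add: matrix_mul_rid)
  qed
  have AA: "A ** A = mat 1"
    using rep[OF mSL mSL] rI by (simp add: A_def mmul_def)
  have AAv: "A *v (A *v v) = v" for v using AA by (simp add: matrix_vector_mul_assoc)
  have cent: "A ** \<rho> g = \<rho> g ** A" if "g \<in> SL2Z" for g
  proof -
    have "mmul (-1,0,0,-1) g = mmul g (-1,0,0,-1)" by (cases g) (simp add: mmul_def)
    then show ?thesis using rep[OF mSL that] rep[OF that mSL] by (simp add: A_def)
  qed
  have A1: "A = mat 1 \<or> A = - mat 1"
  proof (rule ccontr)
    assume ne: "\<not> (A = mat 1 \<or> A = - mat 1)"
    define U where "U = {v. A *v v = v}"
    define W where "W = {v. A *v v = - v}"
    have iU: "invariant_subspace \<rho> U"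
      unfolding invariant_subspace_def csubspace_def U_def
    proof (intro conjI ballI allI)
      fix g v assume g: "g \<in> SL2Z" and v: "v \<in> {v. A *v v = v}"
      have "A *v (\<rho> g *v v) = \<rho> g *v (A *v v)"
        by (simp add: matrix_vector_mul_assoc cent[OF g])
      then show "\<rho> g *v v \<in> {v. A *v v = v}" using v by simp
    qed (auto simp: matrix_vector_right_distrib vector_scalar_commute)
    have iW: "invariant_subspace \<rho> W"
      unfolding invariant_subspace_def csubspace_def W_def
    proof (intro conjI ballI allI)
      fix g v assume g: "g \<in> SL2Z" and v: "v \<in> {v. A *v v = - v}"
      have "A *v (\<rho> g *v v) = \<rho> g *v (A *v v)"
        by (simp add: matrix_vector_mul_assoc cent[OF g])
      then show "\<rho> g *v v \<in> {v. A *v v = - v}" using v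
        by (simp add: vec.neg)
    qed (auto simp: matrix_vector_right_distrib vector_scalar_commute vec.neg)
    have U0: "U \<noteq> {0}"
    proof
      assume "U = {0}"
      have "v + A *v v \<in> U" for v unfolding U_def
        by (simp add: matrix_vector_right_distrib AAv add.commute)
      then have "v + A *v v = 0" for v using \<open>U = {0}\<close> by blast
      then have "A *v v = (- mat 1) *v v" for v
        by (metis neg_mv matrix_vector_mul_lid add.commute add_eq_0_iff)
      then show False using ne matrix_eq by blast
    qed
    have W0: "W \<noteq> {0}"
    proof
      assume "W = {0}"
      have "v - A *v v \<in> W" for v unfolding W_def
        by (simp add: matrix_vector_mult_diff_distrib AAv)
      then have "v - A *v v = 0" for v using \<open>W = {0}\<close> by blast
      then have "A *v v = mat 1 *v v" for v by (metis matrix_vector_mul_lid right_minus_eq)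
      then show False using ne matrix_eq by blast
    qed
    have UW: "U \<inter> W = {0}"
    proof -
      have "v = 0" if "A *v v = v" "A *v v = - v" for v :: "complex^'d"
      proof -
        have "v = - v" using that by simp
        then have "(2::complex) *s v = 0" by (simp add: vec_eq_iff)
        then show ?thesis by (simp add: vec_eq_iff)
      qed
      then show ?thesis unfolding U_def W_def
        by (auto simp: matrix_vector_mult_0_right)
    qed
    have dec: "\<forall>v. \<exists>u\<in>U. \<exists>w\<in>W. v = u + w"
    proof
      fix v
      let ?u = "(1/2::complex) *s (v + A *v v)"
      let ?w = "(1/2::complex) *s (v - A *v v)"
      have "?u \<in> U" unfolding U_def
        by (simp add: vector_scalar_commute matrix_vector_right_distrib AAv add.commute)
      moreover have "?w \<in> W" unfolding W_def
        by (simp add: vector_scalar_commute matrix_vector_mult_diff_distrib AAv vec_eq_iff)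
      moreover have "v = ?u + ?w" by (simp add: vec_eq_iff field_simps)
      ultimately show "\<exists>u\<in>U. \<exists>w\<in>W. v = u + w" by blast
    qed
    show False using assms(3) iU iW U0 W0 UW dec unfolding indecomposable_def by blast
  qed
  obtain F0 where F0: "F0 \<in> mf_space k \<rho> \<upsilon>" "F0 \<noteq> (\<lambda>_. 0)"
    using assms(4) zero_mf by blast
  then obtain z0 where z0: "F0 z0 \<noteq> 0" by auto
  define e where "e = (if A = mat 1 then (1::complex) else -1)"
  have Ae: "A *v v = e *s v" for v
  proof (cases "A = mat 1")
    case True then show ?thesis by (simp add: e_def)
  next
    case False then have "A = - mat 1" using A1 by blast
    then show ?thesis using False by (simp add: e_def neg_mv)
  qed
  define c where "c r = inverse (\<upsilon> (-1,0,0,-1)) * exp (of_real (-r) * (\<i> * pi))" for r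
  have ce: "c r = e" if "F \<in> mf_space r \<rho> \<upsilon>" "F z \<noteq> 0" for F z r
    using eig[OF that] Ae[of "F z"] scal_eq[OF _ that(2)] by (simp add: A_def c_def)
  have c0: "c k = e" using ce[OF F0(1) z0] .
  have codd: "c (k + of_int n) = - c k" if od: "odd n" for n
  proof -
    obtain j where j: "n = 2 * j + 1" using oddE[OF od] by blast
    have "of_real (-(k + of_int n)) * (\<i> * pi) = of_real (-k) * (\<i> * pi) + of_real (2 * of_int (-j - 1) * pi) * \<i> + \<i> * pi"
      by (simp add: j algebra_simps)
    then have "exp (of_real (-(k + of_int n)) * (\<i> * pi)) = exp (of_real (-k) * (\<i> * pi)) * exp (of_real (2 * of_int (-j - 1) * pi) * \<i>) * exp (\<i> * pi)"
      by (simp only: exp_add)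
    also have "exp (of_real (2 * of_int (-j - 1) * pi) * \<i>) = 1"
      by (rule exp_integer_2pi) (simp add: Ints_of_int)
    finally have "exp (of_real (-(k + of_int n)) * (\<i> * pi)) = - exp (of_real (-k) * (\<i> * pi))" by simp
    then show ?thesis by (simp add: c_def)
  qed
  have e0: "e \<noteq> 0" by (simp add: e_def)
  have odd0: "F = (\<lambda>_. 0)" if "F \<in> mf_space (k + of_int n) \<rho> \<upsilon>" "odd n" for F n
  proof (rule ccontr)
    assume "F \<noteq> (\<lambda>_. 0)"
    then obtain z where "F z \<noteq> 0" by auto
    then have "c (k + of_int n) = e" using ce that(1) by blast
    then show False using codd[OF that(2)] c0 e0 by simp
  qed
  have "graded_sum k \<rho> \<upsilon> UNIV = graded_sum k \<rho> \<upsilon> (range (\<lambda>n. 2 * n))"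
  proof (intro set_eqI iffI)
    fix G assume G: "G \<in> graded_sum k \<rho> \<upsilon> UNIV"
    have G1: "finite {n. G n \<noteq> (\<lambda>_. 0)}" and G2: "\<And>n. G n \<in> mf_space (k + of_int n) \<rho> \<upsilon>"
      using G unfolding graded_sum_def by auto
    have G3: "G n = (\<lambda>_. 0)" if "n \<notin> range (\<lambda>n. 2 * n)" for n
    proof -
      have "odd n" using that by (auto elim!: evenE)
      then show ?thesis using odd0[OF G2[of n]] by simp
    qed
    have G4: "G n \<in> mf_space (k + of_int n) \<rho> \<upsilon>" if "n \<in> range (\<lambda>n. 2 * n)" for n
      using G2 by simp
    show "G \<in> graded_sum k \<rho> \<upsilon> (range (\<lambda>n. 2 * n))"
      unfolding graded_sum_def mem_Collect_eq using G1 G3 G4 by simp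
  next
    fix G assume G: "G \<in> graded_sum k \<rho> \<upsilon> (range (\<lambda>n. 2 * n))"
    have G1: "finite {n. G n \<noteq> (\<lambda>_. 0)}"
      and G2: "\<And>n. n \<in> range (\<lambda>n. 2 * n) \<Longrightarrow> G n \<in> mf_space (k + of_int n) \<rho> \<upsilon>"
      and G3: "\<And>n. n \<notin> range (\<lambda>n. 2 * n) \<Longrightarrow> G n = (\<lambda>_. 0)"
      using G unfolding graded_sum_def by auto
    have G4: "G n \<in> mf_space (k + of_int n) \<rho> \<upsilon>" for n
    proof (cases "n \<in> range (\<lambda>n. 2 * n)")
      case True then show ?thesis by (rule G2)
    next
      case False then show ?thesis using G3[OF False] zero_mf by simp
    qed
    show "G \<in> graded_sum k \<rho> \<upsilon> UNIV"
      unfolding graded_sum_def mem_Collect_eq using G1 G4 by simp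
  qed
  then show ?thesis using A1 by (simp add: A_def mm)
qed

end
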